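(* Let $G$ be a connected graph on $n\ge2$ vertices, $\alpha\in\mathbb{R}$, with vertices labeled so that $({}^\alpha\mathbb{M})_1\ge\cdots\ge({}^\alpha\mathbb{M})_n$. Let $T=\min_{1\le i\ne j\le n}d_{ij}\mathbb{D}_j^\alpha/\mathbb{D}_i^\alpha$. Then \[\rho(\mathbb{D}(G))\ge \frac{({}^\alpha\mathbb{M})_n-T+\sqrt{(({}^\alpha\mathbb{M})_n+T)^2+4T\sum_{k=1}^{n-1}\big(({}^\alpha\mathbb{M})_k-({}^\alpha\mathbb{M})_n\big)}}{2}.\] Equality holds if and only if $({}^\alpha\mathbb{M})_1=\cdots=({}^\alpha\mathbb{M})_n$, or for some $2\le t\le n$: (i) $d_{kl}\mathbb{D}_l^\alpha/\mathbb{D}_k^\alpha=T$ for all $1\le k\le n$, $1\le l\le t-1$, $k\ne l$; (ii) $({}^\alpha\mathbb{M})_t=\cdots=({}^\alpha\mathbb{M})_n$.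
   Context: $\mathbb{D}(G)=(d_{ij})$ is the distance matrix of $G$, $\mathbb{D}_i=\sum_j d_{ij}$ the transmission of $v_i$, and $({}^\alpha\mathbb{M})_i=\frac{\sum_{j=1}^n d_{ij}\mathbb{D}_j^\alpha}{\mathbb{D}_i^\alpha}$ the generalized average transmission. $\rho$ is the spectral radius. *)

theory Defs
  imports Complex_Main "Jordan_Normal_Form.Spectral_Radius"
begin

definition simple_graph :: "nat \<Rightarrow> (nat \<Rightarrow> nat \<Rightarrow> bool) \<Rightarrow> bool" where
  "simple_graph n E \<longleftrightarrow> (\<forall>i j. E i j \<longrightarrow> i < n \<and> j < n) \<and>
     (\<forall>i j. E i j \<longrightarrow> E j i) \<and> (\<forall>i. \<not> E i i)"

definition is_walk :: "nat \<Rightarrow> (nat \<Rightarrow> nat \<Rightarrow> bool) \<Rightarrow> nat list \<Rightarrow> bool" where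
  "is_walk n E p \<longleftrightarrow> p \<noteq> [] \<and> (\<forall>v\<in>set p. v < n) \<and>
     (\<forall>k. Suc k < length p \<longrightarrow> E (p ! k) (p ! Suc k))"

definition connected_graph :: "nat \<Rightarrow> (nat \<Rightarrow> nat \<Rightarrow> bool) \<Rightarrow> bool" where
  "connected_graph n E \<longleftrightarrow> simple_graph n E \<and>
     (\<forall>i<n. \<forall>j<n. \<exists>p. is_walk n E p \<and> hd p = i \<and> last p = j)"

definition gdist :: "nat \<Rightarrow> (nat \<Rightarrow> nat \<Rightarrow> bool) \<Rightarrow> nat \<Rightarrow> nat \<Rightarrow> nat" where
  "gdist n E i j = (LEAST k. \<exists>p. is_walk n E p \<and> hd p = i \<and> last p = j \<and> length p = Suc k)"

definition dist_matrix :: "nat \<Rightarrow> (nat \<Rightarrow> nat \<Rightarrow> bool) \<Rightarrow> real mat" where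
  "dist_matrix n E = mat n n (\<lambda>(i, j). real (gdist n E i j))"

definition transmission :: "nat \<Rightarrow> (nat \<Rightarrow> nat \<Rightarrow> bool) \<Rightarrow> nat \<Rightarrow> real" where
  "transmission n E i = (\<Sum>j<n. real (gdist n E i j))"

definition gen_avg_trans :: "nat \<Rightarrow> (nat \<Rightarrow> nat \<Rightarrow> bool) \<Rightarrow> real \<Rightarrow> nat \<Rightarrow> real" where
  "gen_avg_trans n E \<alpha> i =
     (\<Sum>j<n. real (gdist n E i j) * transmission n E j powr \<alpha>) / transmission n E i powr \<alpha>"

definition dist_spectral_radius :: "nat \<Rightarrow> (nat \<Rightarrow> nat \<Rightarrow> bool) \<Rightarrow> real" where
  "dist_spectral_radius n E = spectral_radius (map_mat complex_of_real (dist_matrix n E))"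

end

theory Submission
  imports Defs
begin


lemma mv_sum:
  assumes "A \<in> carrier_mat n n" "v \<in> carrier_vec n" "i < n"
  shows "(A *\<^sub>v v) $ i = (\<Sum>j<n. A $$ (i,j) * v $ j)"
  using assms by (auto simp: scalar_prod_def atLeast0LessThan intro!: sum.cong)

lemma sr_upper:
  fixes A :: "real mat"
  assumes A: "A \<in> carrier_mat n n" and n: "n > 0" and nn: "\<forall>i<n. \<forall>j<n. A $$ (i,j) \<ge> 0"
    and y: "\<forall>i<n. y i > 0" and le: "\<forall>i<n. (\<Sum>j<n. A $$ (i,j) * y j) \<le> lam * y i"
  shows "spectral_radius (map_mat complex_of_real A) \<le> lam"
proof -
  let ?C = "map_mat complex_of_real A"
  have C: "?C \<in> carrier_mat n n" using A by auto
  from spectral_radius_mem_max(1)[OF C n] obtain e where e: "e \<in> spectrum ?C"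
    and re: "spectral_radius ?C = norm e" by auto
  from e obtain v where ev: "eigenvector ?C v e" unfolding spectrum_def eigenvalue_def by auto
  hence v: "v \<in> carrier_vec n" and v0: "v \<noteq> 0\<^sub>v n" and eq: "?C *\<^sub>v v = e \<cdot>\<^sub>v v"
    using C unfolding eigenvector_def by auto
  have comp: "e * v $ i = (\<Sum>j<n. complex_of_real (A $$ (i,j)) * v $ j)" if "i < n" for i
  proof -
    have "(?C *\<^sub>v v) $ i = (e \<cdot>\<^sub>v v) $ i" using eq by simp
    thus ?thesis using mv_sum[OF C v that] that v A by auto
  qed
  define f where "f j = norm (v $ j) / y j" for j
  define m where "m = Max (f ` {..<n})"
  have fin: "finite (f ` {..<n})" by auto
  have ne: "f ` {..<n} \<noteq> {}" using n by auto
  obtain i where i: "i < n" "f i = m" using Max_in[OF fin ne] unfolding m_def by auto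
  have fle: "f j \<le> f i" if "j < n" for j using i Max_ge[OF fin] that unfolding m_def by auto
  obtain j where j: "j < n" "v $ j \<noteq> 0" using v v0 by (metis eq_vecI carrier_vecD index_zero_vec(1) index_zero_vec(2))
  have "f j > 0" using j y unfolding f_def by auto
  hence fi: "f i > 0" using fle[OF j(1)] by auto
  have nvi: "norm (v $ i) = f i * y i" using y i unfolding f_def by auto
  have "norm e * norm (v $ i) = norm (\<Sum>j<n. complex_of_real (A $$ (i,j)) * v $ j)"
    using comp[OF i(1)] by (metis norm_mult)
  also have "\<dots> \<le> (\<Sum>j<n. norm (complex_of_real (A $$ (i,j)) * v $ j))" by (rule norm_sum)
  also have "\<dots> = (\<Sum>j<n. A $$ (i,j) * (f j * y j))"
    using nn i y by (intro sum.cong) (auto simp: norm_mult f_def)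
  also have "\<dots> \<le> (\<Sum>j<n. A $$ (i,j) * (f i * y j))"
    using nn i y fle by (intro sum_mono mult_left_mono mult_right_mono) (auto simp: less_imp_le)
  also have "\<dots> = f i * (\<Sum>j<n. A $$ (i,j) * y j)" by (simp add: sum_distrib_left algebra_simps)
  also have "\<dots> \<le> f i * (lam * y i)" using le i fi by (intro mult_left_mono) auto
  also have "\<dots> = lam * norm (v $ i)" using nvi by simp
  finally have "norm e * norm (v $ i) \<le> lam * norm (v $ i)" .
  moreover have "norm (v $ i) > 0" using nvi fi y i by auto
  ultimately have "norm e \<le> lam" by simp
  thus ?thesis using re by simp
qed

lemma pow_nonneg:
  fixes A :: "real mat"
  assumes A: "A \<in> carrier_mat n n" and nn: "\<forall>i<n. \<forall>j<n. A $$ (i,j) \<ge> 0"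
  shows "\<forall>i<n. \<forall>j<n. (A ^\<^sub>m k) $$ (i,j) \<ge> 0"
proof (induction k)
  case 0
  then show ?case using A by auto
next
  case (Suc k)
  have P: "A ^\<^sub>m k \<in> carrier_mat n n" using A by auto
  show ?case
  proof (intro allI impI)
    fix i j assume ij: "i < n" "j < n"
    have "(A ^\<^sub>m Suc k) $$ (i,j) = row (A ^\<^sub>m k) i \<bullet> col A j" using P A ij by simp
    also have "\<dots> = (\<Sum>l<n. (A ^\<^sub>m k) $$ (i,l) * A $$ (l,j))"
      using P A ij by (auto simp: scalar_prod_def atLeast0LessThan intro!: sum.cong)
    also have "\<dots> \<ge> 0" using Suc nn ij by (intro sum_nonneg) auto
    finally show "(A ^\<^sub>m Suc k) $$ (i,j) \<ge> 0" .
  qed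
qed

lemma mv_mono:
  fixes A :: "real mat"
  assumes A: "A \<in> carrier_mat n n" and nn: "\<forall>i<n. \<forall>j<n. A $$ (i,j) \<ge> 0"
    and u: "u \<in> carrier_vec n" and w: "w \<in> carrier_vec n" and le: "\<forall>i<n. u $ i \<le> w $ i"
    and i: "i < n"
  shows "(A *\<^sub>v u) $ i \<le> (A *\<^sub>v w) $ i"
  unfolding mv_sum[OF A u i] mv_sum[OF A w i] using i le nn by (intro sum_mono mult_left_mono) auto

lemma pow_growth:
  fixes A :: "real mat"
  assumes A: "A \<in> carrier_mat n n" and nn: "\<forall>i<n. \<forall>j<n. A $$ (i,j) \<ge> 0"
    and y: "y \<in> carrier_vec n" and c0: "c \<ge> 0"
    and ge: "\<forall>i<n. c * y $ i \<le> (A *\<^sub>v y) $ i"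
  shows "\<forall>i<n. c ^ k * y $ i \<le> (A ^\<^sub>m k *\<^sub>v y) $ i"
proof (induction k)
  case 0
  then show ?case using A y by auto
next
  case (Suc k)
  have P: "A ^\<^sub>m k \<in> carrier_mat n n" using A by auto
  have Pn: "\<forall>i<n. \<forall>j<n. (A ^\<^sub>m k) $$ (i,j) \<ge> 0" by (rule pow_nonneg[OF A nn])
  show ?case
  proof (intro allI impI)
    fix i assume i: "i < n"
    have "c ^ Suc k * y $ i = c * (c ^ k * y $ i)" by simp
    also have "\<dots> \<le> c * (A ^\<^sub>m k *\<^sub>v y) $ i" using Suc i c0 by (intro mult_left_mono) auto
    also have "\<dots> = (A ^\<^sub>m k *\<^sub>v (c \<cdot>\<^sub>v y)) $ i"
      using P y i A by (simp add: mult_mat_vec[OF P y])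
    also have "\<dots> \<le> (A ^\<^sub>m k *\<^sub>v (A *\<^sub>v y)) $ i"
      using ge y A i by (intro mv_mono[OF P Pn]) auto
    also have "\<dots> = (A ^\<^sub>m Suc k *\<^sub>v y) $ i"
      using P A y by (simp add: assoc_mult_mat_vec[OF P A y])
    finally show "c ^ Suc k * y $ i \<le> (A ^\<^sub>m Suc k *\<^sub>v y) $ i" .
  qed
qed

lemma sr_nonneg:
  assumes C: "(C :: complex mat) \<in> carrier_mat n n" and n: "n > 0"
  shows "spectral_radius C \<ge> 0"
  using spectral_radius_mem_max(1)[OF C n] by auto

lemma sr_lower:
  fixes A :: "real mat"
  assumes A: "A \<in> carrier_mat n n" and n: "n > 0" and nn: "\<forall>i<n. \<forall>j<n. A $$ (i,j) \<ge> 0"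
    and y: "\<forall>i<n. y i > 0" and ge: "\<forall>i<n. lam * y i \<le> (\<Sum>j<n. A $$ (i,j) * y j)"
  shows "lam \<le> spectral_radius (map_mat complex_of_real A)"
proof (rule ccontr)
  let ?C = "map_mat complex_of_real A"
  let ?r = "spectral_radius ?C"
  have C: "?C \<in> carrier_mat n n" using A by auto
  assume "\<not> lam \<le> ?r"
  hence lt: "?r < lam" by simp
  have r0: "?r \<ge> 0" by (rule sr_nonneg[OF C n])
  define mu where "mu = (?r + lam) / 2"
  have mu: "0 < mu" "?r < mu" "mu < lam" using lt r0 unfolding mu_def by auto
  define A' where "A' = (1 / mu) \<cdot>\<^sub>m A"
  have A': "A' \<in> carrier_mat n n" using A unfolding A'_def by auto
  have A'e: "A' $$ (i,j) = A $$ (i,j) / mu" if "i < n" "j < n" for i j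
    using A that unfolding A'_def by auto
  let ?C' = "map_mat complex_of_real A'"
  have C': "?C' \<in> carrier_mat n n" using A' by auto
  have "?C' \<in> carrier_mat n n" using A' by auto
  from spectral_radius_mem_max(1)[OF C' n] obtain e where e: "e \<in> spectrum ?C'"
    and re: "spectral_radius ?C' = norm e" by auto
  from e obtain v where ev: "eigenvector ?C' v e" unfolding spectrum_def eigenvalue_def by auto
  hence v: "v \<in> carrier_vec n" and v0: "v \<noteq> 0\<^sub>v n" and eq: "?C' *\<^sub>v v = e \<cdot>\<^sub>v v"
    using C' unfolding eigenvector_def by auto
  have "eigenvector ?C v (complex_of_real mu * e)"
    unfolding eigenvector_def
  proof (intro conjI)
    show "v \<in> carrier_vec (dim_row ?C)" "v \<noteq> 0\<^sub>v (dim_row ?C)" using v v0 A by auto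
    show "?C *\<^sub>v v = (complex_of_real mu * e) \<cdot>\<^sub>v v"
    proof (rule eq_vecI)
      show "dim_vec (?C *\<^sub>v v) = dim_vec ((complex_of_real mu * e) \<cdot>\<^sub>v v)" using A v by auto
      fix i assume "i < dim_vec ((complex_of_real mu * e) \<cdot>\<^sub>v v)"
      hence i: "i < n" using v by auto
      have "(?C' *\<^sub>v v) $ i = (e \<cdot>\<^sub>v v) $ i" using eq by simp
      hence 1: "(\<Sum>j<n. complex_of_real (A $$ (i,j) / mu) * v $ j) = e * v $ i"
        using mv_sum[OF C' v i] i v A' A'e by auto
      have "(?C *\<^sub>v v) $ i = (\<Sum>j<n. complex_of_real (A $$ (i,j)) * v $ j)"
        using mv_sum[OF C v i] i A by auto
      also have "\<dots> = complex_of_real mu * (\<Sum>j<n. complex_of_real (A $$ (i,j) / mu) * v $ j)"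
        using mu by (simp add: sum_distrib_left)
      also have "\<dots> = ((complex_of_real mu * e) \<cdot>\<^sub>v v) $ i" using 1 i v by simp
      finally show "(?C *\<^sub>v v) $ i = ((complex_of_real mu * e) \<cdot>\<^sub>v v) $ i" .
    qed
  qed
  hence "norm (complex_of_real mu * e) \<in> norm ` spectrum ?C"
    unfolding spectrum_def eigenvalue_def by auto
  from spectral_radius_mem_max(2)[OF C n this] have "mu * norm e \<le> ?r"
    using mu by (simp add: norm_mult)
  hence "norm e < 1" using mu by (smt (verit) mult_less_cancel_left2)
  hence "spectral_radius ?C' < 1" using re by simp
  from spectral_radius_jnf_norm_bound_less_1_upper_triangular[OF C' this]
  obtain c where c: "\<And>k. norm_bound (?C' ^\<^sub>m k) c" by auto
  have bnd: "(A' ^\<^sub>m k) $$ (i,j) \<le> c" if "i < n" "j < n" for i j k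
  proof -
    have "?C' ^\<^sub>m k = map_mat complex_of_real (A' ^\<^sub>m k)"
      using of_real_hom.mat_hom_pow[OF A'] by (rule sym)
    with c[of k] that A' have "norm (complex_of_real ((A' ^\<^sub>m k) $$ (i,j))) \<le> c"
      unfolding norm_bound_def by auto
    thus ?thesis by simp
  qed
  have nn': "\<forall>i<n. \<forall>j<n. A' $$ (i,j) \<ge> 0" using nn A'e mu by auto
  let ?y = "vec n y"
  have yv: "?y \<in> carrier_vec n" by simp
  have ge': "\<forall>i<n. (lam / mu) * ?y $ i \<le> (A' *\<^sub>v ?y) $ i"
  proof (intro allI impI)
    fix i assume i: "i < n"
    have "(lam / mu) * ?y $ i = (lam * y i) / mu" using i by simp
    also have "\<dots> \<le> (\<Sum>j<n. A $$ (i,j) * y j) / mu" using ge i mu by (intro divide_right_mono) auto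
    also have "\<dots> = (\<Sum>j<n. A' $$ (i,j) * ?y $ j)" using A'e i by (simp add: sum_divide_distrib)
    also have "\<dots> = (A' *\<^sub>v ?y) $ i" using mv_sum[OF A' yv i] by simp
    finally show "(lam / mu) * ?y $ i \<le> (A' *\<^sub>v ?y) $ i" .
  qed
  have q1: "lam / mu > 1" using mu by simp
  have gro: "\<forall>i<n. (lam / mu) ^ k * ?y $ i \<le> (A' ^\<^sub>m k *\<^sub>v ?y) $ i" for k
    by (rule pow_growth[OF A' nn' yv _ ge']) (use q1 in auto)
  define Y where "Y = (\<Sum>j<n. y j)"
  have up: "(lam / mu) ^ k * y 0 \<le> c * Y" for k
  proof -
    have P: "A' ^\<^sub>m k \<in> carrier_mat n n" using A' by auto
    have "(lam / mu) ^ k * y 0 \<le> (A' ^\<^sub>m k *\<^sub>v ?y) $ 0" using gro[of k] n by auto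
    also have "\<dots> = (\<Sum>j<n. (A' ^\<^sub>m k) $$ (0,j) * y j)" using mv_sum[OF P yv n] by simp
    also have "\<dots> \<le> (\<Sum>j<n. c * y j)" using bnd n y
      by (intro sum_mono mult_right_mono) (auto simp: less_imp_le)
    finally show ?thesis unfolding Y_def by (simp add: sum_distrib_left)
  qed
  obtain k where "c * Y / y 0 < (lam / mu) ^ k" using real_arch_pow[OF q1] by blast
  hence "c * Y < (lam / mu) ^ k * y 0" using y n by (simp add: divide_less_eq)
  with up[of k] show False by simp
qed

lemma sr_strict:
  fixes A :: "real mat"
  assumes A: "A \<in> carrier_mat n n" and n: "n > 0" and nn: "\<forall>i<n. \<forall>j<n. A $$ (i,j) \<ge> 0"
    and y: "\<forall>i<n. y i > 0" and gt: "\<forall>i<n. lam * y i < (\<Sum>j<n. A $$ (i,j) * y j)"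
  shows "lam < spectral_radius (map_mat complex_of_real A)"
proof -
  define g where "g i = ((\<Sum>j<n. A $$ (i,j) * y j) - lam * y i) / y i" for i
  define d where "d = Min (g ` {..<n})"
  have fin: "finite (g ` {..<n})" and ne: "g ` {..<n} \<noteq> {}" using n by auto
  have "d \<in> g ` {..<n}" unfolding d_def using Min_in[OF fin ne] .
  then obtain i where "i < n" "d = g i" by auto
  hence d0: "d > 0" using gt y unfolding g_def by auto
  have "\<forall>i<n. (lam + d) * y i \<le> (\<Sum>j<n. A $$ (i,j) * y j)"
  proof (intro allI impI)
    fix i assume i: "i < n"
    have "d \<le> g i" unfolding d_def using Min_le[OF fin] i by auto
    hence "d * y i \<le> g i * y i" using y i by (intro mult_right_mono) auto
    also have "g i * y i = (\<Sum>j<n. A $$ (i,j) * y j) - lam * y i" using y i unfolding g_def by auto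
    finally show "(lam + d) * y i \<le> (\<Sum>j<n. A $$ (i,j) * y j)" by (simp add: algebra_simps)
  qed
  from sr_lower[OF A n nn y this] d0 show ?thesis by simp
qed

lemma sr_strict2:
  fixes A :: "real mat"
  assumes A: "A \<in> carrier_mat n n" and n: "n > 0" and nn: "\<forall>i<n. \<forall>j<n. A $$ (i,j) \<ge> 0"
    and pos: "\<forall>i<n. \<forall>j<n. i \<noteq> j \<longrightarrow> A $$ (i,j) > 0"
    and y: "\<forall>i<n. y i > 0" and ge: "\<forall>i<n. lam * y i \<le> (\<Sum>j<n. A $$ (i,j) * y j)"
    and i0: "i0 < n" and gt: "lam * y i0 < (\<Sum>j<n. A $$ (i0,j) * y j)"
  shows "lam < spectral_radius (map_mat complex_of_real A)"
proof -
  define g where "g = (\<Sum>j<n. A $$ (i0,j) * y j) - lam * y i0"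
  have g: "g > 0" using gt unfolding g_def by simp
  define eps where "eps = g / (2 * (\<bar>lam\<bar> + 1))"
  have eps: "eps > 0" "\<bar>lam\<bar> * eps < g"
  proof -
    show "eps > 0" using g unfolding eps_def by auto
    have "\<bar>lam\<bar> * eps = g * (\<bar>lam\<bar> / (2 * (\<bar>lam\<bar> + 1)))" unfolding eps_def by simp
    also have "\<dots> < g * 1" using g by (intro mult_strict_left_mono) auto
    finally show "\<bar>lam\<bar> * eps < g" by simp
  qed
  define y' where "y' j = y j + (if j = i0 then eps else 0)" for j
  have y': "\<forall>i<n. y' i > 0" using y eps unfolding y'_def by auto
  have sum': "(\<Sum>j<n. A $$ (i,j) * y' j) = (\<Sum>j<n. A $$ (i,j) * y j) + A $$ (i,i0) * eps" for i
  proof -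
    have "(\<Sum>j<n. A $$ (i,j) * y' j) = (\<Sum>j<n. A $$ (i,j) * y j) + (\<Sum>j<n. if j = i0 then A $$ (i,j) * eps else 0)"
      unfolding y'_def sum.distrib[symmetric] by (intro sum.cong) (auto simp: distrib_left)
    also have "(\<Sum>j<n. if j = i0 then A $$ (i,j) * eps else 0) = A $$ (i,i0) * eps"
      using i0 by (simp add: sum.delta)
    finally show ?thesis .
  qed
  have "\<forall>i<n. lam * y' i < (\<Sum>j<n. A $$ (i,j) * y' j)"
  proof (intro allI impI)
    fix i assume i: "i < n"
    show "lam * y' i < (\<Sum>j<n. A $$ (i,j) * y' j)"
    proof (cases "i = i0")
      case True
      have "lam * y' i = lam * y i0 + lam * eps" using True unfolding y'_def by (simp add: algebra_simps)
      also have "\<dots> < lam * y i0 + g" using eps abs_ge_self[of lam] eps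
        by (smt (verit) mult_right_mono)
      also have "\<dots> = (\<Sum>j<n. A $$ (i0,j) * y j)" unfolding g_def by simp
      also have "\<dots> \<le> (\<Sum>j<n. A $$ (i,j) * y' j)" using sum'[of i] True nn i eps by auto
      finally show ?thesis .
    next
      case False
      have "lam * y' i = lam * y i" using False unfolding y'_def by simp
      also have "\<dots> \<le> (\<Sum>j<n. A $$ (i,j) * y j)" using ge i by auto
      also have "\<dots> < (\<Sum>j<n. A $$ (i,j) * y' j)" using sum'[of i] pos i i0 False eps by auto
      finally show ?thesis .
    qed
  qed
  from sr_strict[OF A n nn y' this] show ?thesis .
qed


lemma comb:
  fixes M :: "nat \<Rightarrow> real" and r :: "nat \<Rightarrow> nat \<Rightarrow> real"
  assumes n2: "n \<ge> 2" and sorted: "\<And>i j. i \<le> j \<Longrightarrow> j < n \<Longrightarrow> M j \<le> M i"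
  shows "(\<forall>i<n. \<forall>j<n. i \<noteq> j \<longrightarrow> (r i j - T) * (M j - M (n-1)) = 0) \<longleftrightarrow>
      ((\<forall>k<n. M k = M 0) \<or>
      (\<exists>t. 1 \<le> t \<and> t \<le> n - 1 \<and>
         (\<forall>k<n. \<forall>l<t. k \<noteq> l \<longrightarrow> r k l = T) \<and>
         (\<forall>k. t \<le> k \<and> k < n \<longrightarrow> M k = M (n - 1))))"
proof
  assume H: "\<forall>i<n. \<forall>j<n. i \<noteq> j \<longrightarrow> (r i j - T) * (M j - M (n-1)) = 0"
  show "(\<forall>k<n. M k = M 0) \<or>
      (\<exists>t. 1 \<le> t \<and> t \<le> n - 1 \<and>
         (\<forall>k<n. \<forall>l<t. k \<noteq> l \<longrightarrow> r k l = T) \<and>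
         (\<forall>k. t \<le> k \<and> k < n \<longrightarrow> M k = M (n - 1)))"
  proof (cases "\<forall>j<n. M j = M (n-1)")
    case True
    have "0 < n" "n - 1 < n" using n2 by auto
    have "\<forall>k<n. M k = M 0"
    proof (intro allI impI)
      fix k assume "k < n"
      hence "M k = M (n-1)" using True by blast
      moreover have "M 0 = M (n-1)" using True \<open>0 < n\<close> by blast
      ultimately show "M k = M 0" by simp
    qed
    then show ?thesis by blast
  next
    case False
    define J where "J = {j. j < n \<and> M j \<noteq> M (n-1)}"
    have fin: "finite J" unfolding J_def by auto
    have ne: "J \<noteq> {}" using False unfolding J_def by auto
    define mx where "mx = Max J"
    have mxJ: "mx \<in> J" unfolding mx_def using Max_in[OF fin ne] .
    have mxge: "j \<le> mx" if "j \<in> J" for j unfolding mx_def using Max_ge[OF fin that] .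
    have "mx < n" "mx \<noteq> n - 1" using mxJ unfolding J_def by auto
    hence mxn: "mx < n - 1" by linarith
    have "M mx \<noteq> M (n-1)" using mxJ unfolding J_def by blast
    moreover have "M (n-1) \<le> M mx" using sorted[of mx "n-1"] mxn by linarith
    ultimately have Mmx: "M mx > M (n-1)" by linarith
    show ?thesis
    proof (rule disjI2, rule exI[of _ "Suc mx"], intro conjI)
      show "1 \<le> Suc mx" by simp
      show "Suc mx \<le> n - 1" using mxn by simp
      show "\<forall>k<n. \<forall>l<Suc mx. k \<noteq> l \<longrightarrow> r k l = T"
      proof (intro allI impI)
        fix k l assume kl: "k < n" "l < Suc mx" "k \<noteq> l"
        have "M l \<ge> M mx" using sorted[of l mx] kl mxn by auto
        hence "M l - M (n-1) \<noteq> 0" using Mmx by auto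
        moreover have "l < n" using kl mxn by auto
        ultimately show "r k l = T" using H kl by auto
      qed
      show "\<forall>k. Suc mx \<le> k \<and> k < n \<longrightarrow> M k = M (n - 1)"
      proof (intro allI impI)
        fix k assume k: "Suc mx \<le> k \<and> k < n"
        hence "k \<notin> J" using mxge by fastforce
        thus "M k = M (n - 1)" using k unfolding J_def by blast
      qed
    qed
  qed
next
  assume "(\<forall>k<n. M k = M 0) \<or>
      (\<exists>t. 1 \<le> t \<and> t \<le> n - 1 \<and>
         (\<forall>k<n. \<forall>l<t. k \<noteq> l \<longrightarrow> r k l = T) \<and>
         (\<forall>k. t \<le> k \<and> k < n \<longrightarrow> M k = M (n - 1)))"
  then show "\<forall>i<n. \<forall>j<n. i \<noteq> j \<longrightarrow> (r i j - T) * (M j - M (n-1)) = 0"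
  proof
    assume A0: "\<forall>k<n. M k = M 0"
    have "n - 1 < n" using n2 by auto
    hence "M (n-1) = M 0" using A0 by blast
    show ?thesis
    proof (intro allI impI)
      fix i j assume "i < n" "j < n" "i \<noteq> j"
      hence "M j = M 0" using A0 by blast
      thus "(r i j - T) * (M j - M (n-1)) = 0" using \<open>M (n-1) = M 0\<close> by simp
    qed
  next
    assume "\<exists>t. 1 \<le> t \<and> t \<le> n - 1 \<and>
         (\<forall>k<n. \<forall>l<t. k \<noteq> l \<longrightarrow> r k l = T) \<and>
         (\<forall>k. t \<le> k \<and> k < n \<longrightarrow> M k = M (n - 1))"
    then obtain t where t: "\<forall>k<n. \<forall>l<t. k \<noteq> l \<longrightarrow> r k l = T"
        "\<forall>k. t \<le> k \<and> k < n \<longrightarrow> M k = M (n - 1)" by blast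
    show ?thesis
    proof (intro allI impI)
      fix i j assume ij: "i < n" "j < n" "i \<noteq> j"
      show "(r i j - T) * (M j - M (n-1)) = 0"
      proof (cases "j < t")
        case True
        hence "r i j = T" using t(1) ij by blast
        thus ?thesis by simp
      next
        case False
        hence "M j = M (n - 1)" using t(2) ij by (meson not_less)
        thus ?thesis by simp
      qed
    qed
  qed
qed



lemma gdist_refl:
  assumes "i < n" shows "gdist n E i i = 0"
proof -
  have "is_walk n E [i]" using assms unfolding is_walk_def by auto
  hence "\<exists>p. is_walk n E p \<and> hd p = i \<and> last p = i \<and> length p = Suc 0" by (intro exI[of _ "[i]"]) auto
  thus ?thesis unfolding gdist_def by (intro Least_eq_0) 
qed

lemma gdist_pos:
  assumes conn: "connected_graph n E" and ij: "i < n" "j < n" "i \<noteq> j"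
  shows "gdist n E i j \<ge> 1"
proof -
  obtain p where p: "is_walk n E p" "hd p = i" "last p = j"
    using conn ij unfolding connected_graph_def by blast
  have "p \<noteq> []" using p unfolding is_walk_def by auto
  hence "\<exists>k. \<exists>p. is_walk n E p \<and> hd p = i \<and> last p = j \<and> length p = Suc k"
    using p by (intro exI[of _ "length p - 1"] exI[of _ p]) auto
  from LeastI_ex[OF this] obtain q where q: "is_walk n E q" "hd q = i" "last q = j"
    "length q = Suc (gdist n E i j)" unfolding gdist_def by blast
  show ?thesis
  proof (rule ccontr)
    assume "\<not> 1 \<le> gdist n E i j"
    hence "length q = 1" using q by simp
    then obtain a where "q = [a]" by (cases q) auto
    thus False using q ij by simp
  qed
qed

lemma trans_pos:
  assumes conn: "connected_graph n E" and n2: "n \<ge> 2" and i: "i < n"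
  shows "transmission n E i > 0"
proof -
  obtain j where j: "j < n" "j \<noteq> i" using n2 i
    by (metis One_nat_def less_2_cases_iff less_le_trans not_less_eq_eq numeral_2_eq_2 Suc_leD)
  have "real (gdist n E i j) \<ge> 1" using gdist_pos[OF conn i j(1)] j by simp
  moreover have "real (gdist n E i j) \<le> transmission n E i"
    unfolding transmission_def using j by (intro member_le_sum) auto
  ultimately show ?thesis by simp
qed


lemma aux_e2:
  fixes B K v x :: real
  assumes "K \<noteq> 0" shows "(B * (1 + v / K) + x / K) * K = B * K + B * v + x"
  using assms by (simp add: field_simps)

theorem theorem6:
  fixes n :: nat and E :: "nat \<Rightarrow> nat \<Rightarrow> bool" and \<alpha> :: real
  assumes conn: "connected_graph n E"
    and n2: "n \<ge> 2"
    and sorted: "\<And>i j. i \<le> j \<Longrightarrow> j < n \<Longrightarrow> gen_avg_trans n E \<alpha> j \<le> gen_avg_trans n E \<alpha> i"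
  defines "M \<equiv> gen_avg_trans n E \<alpha>"
    and "r \<equiv> (\<lambda>i j. real (gdist n E i j) * transmission n E j powr \<alpha> / transmission n E i powr \<alpha>)"
  defines "T \<equiv> Min {r i j | i j. i < n \<and> j < n \<and> i \<noteq> j}"
  defines "B \<equiv> (M (n - 1) - T + sqrt ((M (n - 1) + T)\<^sup>2
                 + 4 * T * (\<Sum>k<n - 1. M k - M (n - 1)))) / 2"
  shows "dist_spectral_radius n E \<ge> B \<and>
    (dist_spectral_radius n E = B \<longleftrightarrow>
      (\<forall>k<n. M k = M 0) \<or>
      (\<exists>t. 1 \<le> t \<and> t \<le> n - 1 \<and>
         (\<forall>k<n. \<forall>l<t. k \<noteq> l \<longrightarrow> r k l = T) \<and>
         (\<forall>k. t \<le> k \<and> k < n \<longrightarrow> M k = M (n - 1))))"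
proof -
  let ?D = "dist_matrix n E"
  let ?rho = "dist_spectral_radius n E"
  have n0: "n > 0" using n2 by auto
  have Dc: "?D \<in> carrier_mat n n" unfolding dist_matrix_def by simp
  have De: "?D $$ (i,j) = real (gdist n E i j)" if "i < n" "j < n" for i j
    using that by (simp add: dist_matrix_def)
  have rho: "?rho = spectral_radius (map_mat complex_of_real ?D)"
    unfolding dist_spectral_radius_def by simp
  define w where "w i = transmission n E i powr \<alpha>" for i
  have wpos: "w i > 0" if "i < n" for i
    using trans_pos[OF conn n2 that] unfolding w_def by simp
  have rdef: "r i j = real (gdist n E i j) * w j / w i" for i j
    unfolding r_def w_def by simp
  have r0: "r i i = 0" if "i < n" for i using gdist_refl[OF that] rdef by simp
  have rnn: "r i j \<ge> 0" if "i < n" "j < n" for i j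
    using wpos[OF that(1)] wpos[OF that(2)] unfolding rdef by simp
  have rpos: "r i j > 0" if "i < n" "j < n" "i \<noteq> j" for i j
    using wpos[OF that(1)] wpos[OF that(2)] gdist_pos[OF conn that] unfolding rdef by simp
  have Msum: "M i = (\<Sum>j<n. r i j)" for i
    unfolding M_def gen_avg_trans_def r_def by (simp add: sum_divide_distrib)
  define Rset where "Rset = {r i j | i j. i < n \<and> j < n \<and> i \<noteq> j}"
  have T_R: "T = Min Rset" unfolding T_def Rset_def by simp
  have Rfin: "finite Rset"
  proof (rule finite_subset)
    show "Rset \<subseteq> (\<lambda>(i,j). r i j) ` ({..<n} \<times> {..<n})" unfolding Rset_def by force
  qed auto
  have Rne: "r 0 1 \<in> Rset" unfolding Rset_def using n2 by force
  have Tle: "T \<le> r i j" if "i < n" "j < n" "i \<noteq> j" for i j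
    unfolding T_R using that by (intro Min_le[OF Rfin]) (auto simp: Rset_def)
  have "T \<in> Rset" unfolding T_R using Min_in[OF Rfin] Rne by blast
  then obtain i1 j1 where "T = r i1 j1" "i1 < n" "j1 < n" "i1 \<noteq> j1" unfolding Rset_def by blast
  hence Tpos: "T > 0" using rpos by simp
  define v where "v k = M k - M (n-1)" for k
  have vnn: "v k \<ge> 0" if "k < n" for k
    using sorted[of k "n-1"] that unfolding v_def M_def by simp
  have sortedM: "M j \<le> M i" if "i \<le> j" "j < n" for i j
    using sorted[OF that] unfolding M_def .
  define S where "S = (\<Sum>k<n-1. v k)"
  have S_all: "(\<Sum>k<n. v k) = S"
  proof -
    have "n = Suc (n-1)" using n0 by simp
    hence "(\<Sum>k<n. v k) = (\<Sum>k<Suc (n-1). v k)" by simp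
    also have "\<dots> = S + v (n-1)" unfolding S_def by simp
    finally show ?thesis unfolding v_def by simp
  qed
  have S0: "S \<ge> 0" unfolding S_def using vnn by (intro sum_nonneg) auto
  have Mm: "M (n-1) > 0"
  proof -
    have "r (n-1) 0 > 0" using rpos[of "n-1" 0] n2 by simp
    also have "r (n-1) 0 \<le> (\<Sum>j<n. r (n-1) j)"
      using rnn n0 by (intro member_le_sum) auto
    finally show ?thesis unfolding Msum .
  qed
  define q where "q = sqrt ((M (n-1) + T)\<^sup>2 + 4 * T * S)"
  have rad: "0 \<le> (M (n-1) + T)\<^sup>2 + 4 * T * S"
  proof -
    have "0 \<le> 4 * T * S" using Tpos S0 by simp
    thus ?thesis by (simp add: add_nonneg_nonneg)
  qed
  have q0: "q \<ge> 0" unfolding q_def using rad by simp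
  have q2: "q\<^sup>2 = (M (n-1) + T)\<^sup>2 + 4 * T * S"
    unfolding q_def using rad by simp
  have Bq: "B = (M (n-1) - T + q) / 2" unfolding B_def q_def S_def v_def by simp
  have BT: "B + T > 0" using Bq q0 Mm Tpos by simp
  have key: "(M (n-1) - B) * (B + T) + T * S = 0"
  proof -
    have "(M (n-1) - B) * (B + T) = ((M (n-1) + T)\<^sup>2 - q\<^sup>2) / 4"
      unfolding Bq by (simp add: power2_eq_square field_simps)
    thus ?thesis using q2 by simp
  qed
  define z where "z k = 1 + v k / (B + T)" for k
  define y where "y k = w k * z k" for k
  have ypos: "\<forall>i<n. y i > 0"
    using wpos vnn BT unfolding y_def z_def by (auto intro!: mult_pos_pos add_pos_nonneg)
  define Ex where "Ex i = (\<Sum>j<n. if j = i then 0 else (r i j - T) * v j)" for i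
  have Exnn: "Ex i \<ge> 0" if "i < n" for i
    unfolding Ex_def using Tle vnn that by (intro sum_nonneg) auto
  have main: "(\<Sum>j<n. ?D $$ (i,j) * y j) = B * y i + w i * Ex i / (B + T)" if i: "i < n" for i
  proof -
    have "(\<Sum>j<n. ?D $$ (i,j) * y j) = (\<Sum>j<n. w i * (r i j * z j))"
      using wpos[OF i] i De unfolding rdef y_def by (intro sum.cong) auto
    also have "\<dots> = w i * (\<Sum>j<n. r i j * z j)" by (simp add: sum_distrib_left)
    also have "(\<Sum>j<n. r i j * z j) = M i + (\<Sum>j<n. r i j * v j) / (B + T)"
      unfolding Msum z_def by (simp add: distrib_left sum.distrib sum_divide_distrib)
    also have "(\<Sum>j<n. r i j * v j) = Ex i + T * (S - v i)"
    proof -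
      have "(\<Sum>j<n. r i j * v j) = Ex i + (\<Sum>j<n. if j = i then 0 else T * v j)"
        unfolding Ex_def sum.distrib[symmetric] using r0 by (intro sum.cong) (auto simp: algebra_simps)
      moreover have "(\<Sum>j<n. T * v j) = (\<Sum>j<n. if j = i then 0 else T * v j) + (\<Sum>j<n. if j = i then T * v j else 0)"
        unfolding sum.distrib[symmetric] by (intro sum.cong) auto
      moreover have "(\<Sum>j<n. if j = i then T * v j else 0) = T * v i" using i by (simp add: sum.delta)
      moreover have "(\<Sum>j<n. T * v j) = T * S" using S_all by (simp add: sum_distrib_left[symmetric])
      ultimately show ?thesis by (simp add: algebra_simps)
    qed
    also have "w i * (M i + (Ex i + T * (S - v i)) / (B + T)) = B * y i + w i * Ex i / (B + T)"
    proof -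
      have Mi: "M i = M (n-1) + v i" unfolding v_def by simp
      have "M i + (Ex i + T * (S - v i)) / (B + T) = B * z i + Ex i / (B + T)"
      proof -
        have K: "B + T \<noteq> 0" using BT by simp
        have e1: "(M i + (Ex i + T * (S - v i)) / (B + T)) * (B + T) = M (n-1) * (B+T) + v i * (B + T) + (Ex i + T * (S - v i))"
          using K unfolding Mi by (simp add: field_simps)
        have e2: "(B * z i + Ex i / (B + T)) * (B + T) = B * (B + T) + B * v i + Ex i"
          using K unfolding z_def by (rule aux_e2)
        have k2: "M (n-1) * (B+T) - B * (B + T) + T * S = 0" using key by (simp add: algebra_simps)
        have "(M i + (Ex i + T * (S - v i)) / (B + T)) * (B + T) = (B * z i + Ex i / (B + T)) * (B + T)"
          unfolding e1 e2 using k2 by (simp add: algebra_simps)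
        thus ?thesis using BT by simp
      qed
      thus ?thesis unfolding y_def by (simp add: algebra_simps)
    qed
    finally show ?thesis .
  qed
  have Dnn: "\<forall>i<n. \<forall>j<n. ?D $$ (i,j) \<ge> 0" using De by simp
  have Dpos: "\<forall>i<n. \<forall>j<n. i \<noteq> j \<longrightarrow> ?D $$ (i,j) > 0"
  proof (intro allI impI)
    fix i j assume "i < n" "j < n" "i \<noteq> j"
    thus "?D $$ (i,j) > 0" using De gdist_pos[OF conn, of i j] by simp
  qed
  have ge: "\<forall>i<n. B * y i \<le> (\<Sum>j<n. ?D $$ (i,j) * y j)"
  proof (intro allI impI)
    fix i assume i: "i < n"
    have "0 \<le> w i * Ex i" using Exnn[OF i] wpos[OF i] by simp
    hence "0 \<le> w i * Ex i / (B + T)" using BT by simp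
    thus "B * y i \<le> (\<Sum>j<n. ?D $$ (i,j) * y j)" using main[OF i] by simp
  qed
  have lower: "B \<le> ?rho" unfolding rho by (rule sr_lower[OF Dc n0 Dnn ypos ge])
  have eqiff: "?rho = B \<longleftrightarrow> (\<forall>i<n. Ex i = 0)"
  proof
    assume eq: "?rho = B"
    show "\<forall>i<n. Ex i = 0"
    proof (rule ccontr)
      assume "\<not> (\<forall>i<n. Ex i = 0)"
      then obtain i0 where i0: "i0 < n" "Ex i0 \<noteq> 0" by blast
      hence "Ex i0 > 0" using Exnn[of i0] by simp
      hence "B * y i0 < (\<Sum>j<n. ?D $$ (i0,j) * y j)" using main[OF i0(1)] wpos[OF i0(1)] BT by simp
      from sr_strict2[OF Dc n0 Dnn Dpos ypos ge i0(1) this] eq rho show False by simp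
    qed
  next
    assume "\<forall>i<n. Ex i = 0"
    hence "\<forall>i<n. (\<Sum>j<n. ?D $$ (i,j) * y j) \<le> B * y i" using main by simp
    from sr_upper[OF Dc n0 Dnn ypos this] lower rho show "?rho = B" by simp
  qed
  have Exiff: "(\<forall>i<n. Ex i = 0) \<longleftrightarrow> (\<forall>i<n. \<forall>j<n. i \<noteq> j \<longrightarrow> (r i j - T) * (M j - M (n-1)) = 0)"
  proof -
    have "Ex i = 0 \<longleftrightarrow> (\<forall>j<n. i \<noteq> j \<longrightarrow> (r i j - T) * (M j - M (n-1)) = 0)" if i: "i < n" for i
    proof -
      have "Ex i = 0 \<longleftrightarrow> (\<forall>j\<in>{..<n}. (if j = i then 0 else (r i j - T) * v j) = 0)"
        unfolding Ex_def using Tle vnn i by (intro sum_nonneg_eq_0_iff) auto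
      thus ?thesis unfolding v_def by auto
    qed
    thus ?thesis by auto
  qed
  show ?thesis
    using lower eqiff Exiff comb[OF n2 sortedM, where r=r and T=T] by simp
qed

end
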